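(* Assume $g$ satisfies (Hg), and let $k>0$, $(a,d)\in\mathcal H$. Then the following are equivalent: (i) $(a,d)\in\mathcal D^-(k)$; (ii) there exists $A\in(a,1)$ with $$\max_{v\in[0,A]}\big(d(k+1)v-dkA-g(v;a)\big)<0.$$
   Context: Let $\mathcal H=(0,1)\times(0,\infty)$. A function $g:\mathbb R\times[0,1]\to\mathbb R$, $(u,a)\mapsto g(u;a)$, satisfies (Hg) if it is $C^1$ and for every $a\in(0,1)$: $g(0;a)=g(a;a)=g(1;a)=0$, $g'(0;a)<0$, $g'(1;a)<0$, $g'(a;a)>0$ (where $g'=\partial_u g$), $g(v;a)>0$ for $v\in(-\infty,0)\cup(a,1)$ and $g(v;a)<0$ for $v\in(0,a)\cup(1,\infty)$. For $A\in(0,1)$ let $d^\diamond(A;a)=\inf\{d>0:\ d(k+1)(A-v)-g(A;a)\ge -g(v;a)\ \text{for all }v\in[0,A]\}$ and $$\mathcal D^-(k)=\Big\{(a,d)\in\mathcal H:\ d^\diamond(A;a)<d<\frac{g(A;a)}{A}\ \text{for some }A\in(a,1)\Big\}.$$ *)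

theory Defs
  imports "HOL-Analysis.Analysis"
begin

text \<open>g u a stands for g(u;a). C^1 on R x [0,1]: continuous partial derivatives gu, ga
  giving the (Frechet) derivative of (u,a) |-> g u a relative to R x [0,1].\<close>

definition C1_strip :: "(real \<Rightarrow> real \<Rightarrow> real) \<Rightarrow> bool" where
  "C1_strip g \<longleftrightarrow> (\<exists>gu ga :: real \<Rightarrow> real \<Rightarrow> real.
      continuous_on (UNIV \<times> {0..1}) (\<lambda>(u,a). gu u a) \<and>
      continuous_on (UNIV \<times> {0..1}) (\<lambda>(u,a). ga u a) \<and>
      (\<forall>u a. a \<in> {0..1} \<longrightarrow>
         ((\<lambda>(x,y). g x y) has_derivative (\<lambda>(h,l). gu u a * h + ga u a * l))
           (at (u,a) within UNIV \<times> {0..1})))"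

definition Hg :: "(real \<Rightarrow> real \<Rightarrow> real) \<Rightarrow> bool" where
  "Hg g \<longleftrightarrow> C1_strip g \<and>
    (\<forall>a. 0 < a \<and> a < 1 \<longrightarrow>
       g 0 a = 0 \<and> g a a = 0 \<and> g 1 a = 0 \<and>
       deriv (\<lambda>u. g u a) 0 < 0 \<and> deriv (\<lambda>u. g u a) 1 < 0 \<and> deriv (\<lambda>u. g u a) a > 0 \<and>
       (\<forall>v. (v < 0 \<or> (a < v \<and> v < 1)) \<longrightarrow> g v a > 0) \<and>
       (\<forall>v. ((0 < v \<and> v < a) \<or> 1 < v) \<longrightarrow> g v a < 0))"

definition d_diamond :: "real \<Rightarrow> (real \<Rightarrow> real \<Rightarrow> real) \<Rightarrow> real \<Rightarrow> real \<Rightarrow> real" where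
  "d_diamond k g A a = Inf {d. d > 0 \<and>
      (\<forall>v\<in>{0..A}. d * (k + 1) * (A - v) - g A a \<ge> - g v a)}"

definition D_minus :: "real \<Rightarrow> (real \<Rightarrow> real \<Rightarrow> real) \<Rightarrow> (real \<times> real) set" where
  "D_minus k g = {(a, d). 0 < a \<and> a < 1 \<and> 0 < d \<and>
      (\<exists>A\<in>{a<..<1}. d_diamond k g A a < d \<and> d < g A a / A)}"

end

theory Submission
  imports Defs
begin

lemma partial_deriv:
  assumes "C1_strip g" and "0 \<le> a" "a \<le> 1"
  shows "\<exists>G'. (\<forall>u. ((\<lambda>x. g x a) has_real_derivative G' u) (at u)) \<and> continuous_on UNIV G'"
proof -
  obtain gu ga where c1: "continuous_on (UNIV \<times> {0..1}) (\<lambda>(u,a). gu u a)"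
    and d: "\<forall>u a. a \<in> {0..1} \<longrightarrow>
         ((\<lambda>(x,y). g x y) has_derivative (\<lambda>(h,l). gu u a * h + ga u a * l))
           (at (u,a) within UNIV \<times> {0..1})"
    using assms(1) unfolding C1_strip_def by blast
  have a01: "a \<in> {0..1}" using assms by auto
  have "((\<lambda>x. (\<lambda>(x,y). g x y) ((\<lambda>x. (x, a)) x)) has_derivative
        (\<lambda>h. (\<lambda>p. (\<lambda>(h,l). gu (fst p) (snd p) * h + ga (fst p) (snd p) * l)) ((\<lambda>x. (x, a)) u) ((\<lambda>h. (h, 0)) h))) (at u within UNIV)" for u
  proof (rule has_derivative_in_compose2[where t="UNIV \<times> {0..1}"])
    show "\<And>x. x \<in> UNIV \<times> {0..1} \<Longrightarrow>
         ((\<lambda>(x, y). g x y) has_derivative (\<lambda>(h, l). gu (fst x) (snd x) * h + ga (fst x) (snd x) * l))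
          (at x within UNIV \<times> {0..1})" using d by auto
    show "(\<lambda>x. (x, a)) ` UNIV \<subseteq> UNIV \<times> {0..1}" using a01 by auto
    show "u \<in> UNIV" by simp
    show "((\<lambda>x. (x, a)) has_derivative (\<lambda>h. (h, 0))) (at u)"
      by (auto intro!: derivative_eq_intros)
  qed
  hence "((\<lambda>x. g x a) has_real_derivative gu u a) (at u)" for u
    by (simp add: has_field_derivative_def mult.commute[of _ "gu _ a"])
  moreover have "continuous_on UNIV (\<lambda>u. gu u a)"
  proof -
    have "continuous_on UNIV ((\<lambda>(u,a). gu u a) \<circ> (\<lambda>u. (u, a)))"
      by (rule continuous_on_compose) (auto intro!: continuous_intros continuous_on_subset[OF c1] simp: assms)
    thus ?thesis by (simp add: o_def)
  qed
  ultimately show ?thesis by (intro exI[of _ "\<lambda>u. gu u a"]) auto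
qed


lemma lip_bound:
  fixes G G' :: "real \<Rightarrow> real"
  assumes der: "\<And>u. (G has_real_derivative G' u) (at u)" and cont: "continuous_on UNIV G'"
    and k: "k > 0" and B: "0 \<le> B" "B \<le> 1"
  shows "\<exists>d0>0. \<forall>v\<in>{0..B}. d0 * (k + 1) * (B - v) - G B \<ge> - G v"
proof -
  have "compact (G' ` {0..1})"
    by (rule compact_continuous_image) (auto intro: continuous_on_subset[OF cont])
  then obtain L where L: "L > 0" "\<And>x. x \<in> {0..1} \<Longrightarrow> norm (G' x) \<le> L"
    using compact_imp_bounded bounded_pos by (metis imageI)
  have "\<forall>v\<in>{0..B}. L / (k + 1) * (k + 1) * (B - v) - G B \<ge> - G v"
  proof
    fix v assume v: "v \<in> {0..B}"
    show "L / (k + 1) * (k + 1) * (B - v) - G B \<ge> - G v"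
    proof (cases "v < B")
      case True
      obtain z where z: "v < z" "z < B" "G B - G v = (B - v) * G' z"
        using MVT2[OF True, of G G'] der by blast
      have "G' z \<le> L" using L(2)[of z] z v B by auto
      hence "(B - v) * G' z \<le> (B - v) * L" using True by (intro mult_left_mono) auto
      moreover have "L / (k + 1) * (k + 1) = L" using k by simp
      ultimately show ?thesis using z by (simp add: algebra_simps)
    next
      case False
      thus ?thesis using v by auto
    qed
  qed
  thus ?thesis using L k by (intro exI[of _ "L / (k+1)"]) auto
qed

theorem proposition5p2:
  fixes g :: "real \<Rightarrow> real \<Rightarrow> real" and k a d :: real
  assumes "Hg g" and "k > 0" and "0 < a" and "a < 1" and "0 < d"
  shows "(a, d) \<in> D_minus k g \<longleftrightarrow>
    (\<exists>A\<in>{a<..<1}. (SUP v\<in>{0..A}. d * (k + 1) * v - d * k * A - g v a) < 0)"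
proof -
  define G where "G = (\<lambda>v. g v a)"
  obtain G' where der: "\<And>u. (G has_real_derivative G' u) (at u)" and cG': "continuous_on UNIV G'"
    using partial_deriv[of g a] assms unfolding Hg_def G_def by auto
  have isc: "isCont G x" for x using der DERIV_isCont by blast
  have contG: "continuous_on UNIV G"
    using isc by (simp add: continuous_at_imp_continuous_on)
  have hyp: "G 1 = 0" using assms unfolding Hg_def G_def by auto
  define S where "S B = {d. d > 0 \<and> (\<forall>v\<in>{0..B}. d * (k + 1) * (B - v) - G B \<ge> - G v)}" for B
  have dd: "d_diamond k g B a = Inf (S B)" for B unfolding d_diamond_def S_def G_def by simp
  have Sne: "S B \<noteq> {}" if "0 \<le> B" "B \<le> 1" for B
    using lip_bound[OF der cG' assms(2) that] unfolding S_def by auto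
  have Sbdd: "bdd_below (S B)" for B unfolding S_def by (auto intro: bdd_belowI[of _ 0])
  show ?thesis
  proof
    assume "(a, d) \<in> D_minus k g"
    then obtain B where B: "a < B" "B < 1" "Inf (S B) < d" "d < G B / B"
      unfolding D_minus_def by (auto simp: dd G_def)
    have "B > 0" using B assms by auto
    obtain d0 where d0: "d0 \<in> S B" "d0 < d"
      using B(3) cInf_less_iff[OF Sne Sbdd, of B] B assms by auto
    have dB: "d * B < G B" using B(4) \<open>B > 0\<close> by (simp add: field_simps)
    have "(SUP v\<in>{0..B}. d * (k + 1) * v - d * k * B - g v a) \<le> d * B - G B"
    proof (rule cSUP_least)
      show "{0..B} \<noteq> {}" using \<open>B > 0\<close> by auto
      fix v assume v: "v \<in> {0..B}"
      have "d0 * (k + 1) * (B - v) - G B \<ge> - G v" using d0(1) v unfolding S_def by auto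
      moreover have "d0 * (k + 1) * (B - v) \<le> d * (k + 1) * (B - v)"
        using d0 v assms by (intro mult_right_mono) auto
      ultimately show "d * (k + 1) * v - d * k * B - g v a \<le> d * B - G B"
        unfolding G_def by (simp add: algebra_simps)
    qed
    thus "\<exists>A\<in>{a<..<1}. (SUP v\<in>{0..A}. d * (k + 1) * v - d * k * A - g v a) < 0"
      using B dB by (intro bexI[of _ B]) auto
  next
    assume "\<exists>A\<in>{a<..<1}. (SUP v\<in>{0..A}. d * (k + 1) * v - d * k * A - g v a) < 0"
    then obtain A where A: "a < A" "A < 1" and sup: "(SUP v\<in>{0..A}. d * (k + 1) * v - d * k * A - g v a) < 0"
      by auto
    define f where "f v = d * (k + 1) * v - d * k * A - G v" for v
    have cf: "continuous_on {0..A} f" unfolding f_def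
      by (intro continuous_intros continuous_on_subset[OF contG]) auto
    have "bdd_above (f ` {0..A})"
      using compact_continuous_image[OF cf compact_Icc] compact_imp_bounded bounded_imp_bdd_above by metis
    define \<epsilon> where "\<epsilon> = - (SUP v\<in>{0..A}. f v)"
    have eps: "\<epsilon> > 0" using sup unfolding \<epsilon>_def f_def G_def by simp
    have fle: "f v \<le> - \<epsilon>" if "v \<in> {0..A}" for v
      unfolding \<epsilon>_def using cSUP_upper[OF that \<open>bdd_above _\<close>] by simp
    define \<eta> where "\<eta> = min \<epsilon> d / (2 * (k + 1))"
    have eta: "\<eta> > 0" "\<eta> * (k + 1) \<le> \<epsilon> / 2" "\<eta> * (k + 1) \<le> d / 2"
    proof -
      have e: "\<eta> * (k + 1) = min \<epsilon> d / 2" unfolding \<eta>_def using assms by (simp add: field_simps)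
      show "\<eta> > 0" unfolding \<eta>_def using eps assms by simp
      show "\<eta> * (k + 1) \<le> \<epsilon> / 2" unfolding e by simp
      show "\<eta> * (k + 1) \<le> d / 2" unfolding e by simp
    qed
    define d' where "d' = d - \<eta>"
    define h where "h v = d' * (k + 1) * v - G v" for v
    define M where "M = d * k * A - \<epsilon>"
    have ch: "continuous_on UNIV h" unfolding h_def by (intro continuous_intros contG)
    have hA: "h v \<le> M" if "v \<in> {0..A}" for v
    proof -
      have "\<eta> * (k + 1) * v \<ge> 0" using that eta assms by auto
      thus ?thesis using fle[OF that] unfolding h_def M_def f_def d'_def by (simp add: algebra_simps)
    qed
    have h1: "h 1 > M"
    proof -
      have "d * k * A < d * k" using A assms by simp
      have "h 1 = d * (k + 1) - \<eta> * (k + 1)" unfolding h_def d'_def using hyp by (simp add: algebra_simps)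
      moreover have "M < d * k * A" unfolding M_def using eps by simp
      moreover have "d * (k + 1) = d * k + d" by (simp add: algebra_simps)
      ultimately show ?thesis using eta(3) \<open>d * k * A < d * k\<close> assms by linarith
    qed
    define T where "T = {v. M \<le> h v} \<inter> {A..1}"
    have Tcl: "closed T" unfolding T_def
      by (intro closed_Int closed_Collect_le continuous_intros ch)
    have "1 \<in> T" using h1 A unfolding T_def by auto
    hence Tne: "T \<noteq> {}" by auto
    have Tbdd: "bdd_below T" unfolding T_def by (auto intro: bdd_belowI[of _ A])
    define B where "B = Inf T"
    have BT: "B \<in> T" unfolding B_def using closed_contains_Inf[OF Tne Tbdd Tcl] .
    have Bmin: "B \<le> v" if "v \<in> T" for v unfolding B_def using cInf_lower[OF that Tbdd] .
    have hB: "h B = M"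
    proof -
      have "h A \<le> M" using hA A assms by auto
      moreover have "M \<le> h B" "A \<le> B" using BT unfolding T_def by auto
      ultimately obtain c where c: "A \<le> c" "c \<le> B" "h c = M"
        using IVT[of h A M B] ch continuous_on_eq_continuous_at by (metis open_UNIV UNIV_I)
      have "c \<in> T" using c BT unfolding T_def by auto
      hence "B \<le> c" by (rule Bmin)
      thus ?thesis using c by auto
    qed
    have B: "A \<le> B" "B < 1" using BT hB h1 unfolding T_def by (auto simp: less_le)
    have rec: "h v \<le> h B" if "v \<in> {0..B}" for v
    proof (cases "v \<le> A")
      case True thus ?thesis using hA that hB by auto
    next
      case False
      show ?thesis
      proof (rule ccontr)
        assume "\<not> h v \<le> h B"
        hence "v \<in> T" using False that B hB unfolding T_def by auto
        hence "B \<le> v" by (rule Bmin)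
        thus False using \<open>\<not> h v \<le> h B\<close> that by auto
      qed
    qed
    have "\<eta> * 1 \<le> \<eta> * (k + 1)" using eta assms by (intro mult_left_mono) auto
    hence etad: "\<eta> < d" using eta(3) assms by linarith
    have d'S: "d' \<in> S B"
      unfolding S_def using rec etad assms unfolding h_def d'_def
      by (auto simp: algebra_simps field_simps)
    have "Inf (S B) \<le> d'" by (rule cInf_lower[OF d'S Sbdd])
    hence dia: "d_diamond k g B a < d" unfolding dd d'_def using eta by simp
    have "G B > d * B"
    proof -
      have GB: "G B = d' * (k + 1) * B - M" using hB unfolding h_def by simp
      have "\<eta> * (k + 1) * B \<le> \<eta> * (k + 1) * 1" using B eta assms by (intro mult_left_mono) auto
      moreover have "d * k * A \<le> d * k * B" using B assms by (intro mult_left_mono) auto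
      ultimately show ?thesis unfolding GB d'_def M_def using eta eps by (simp add: algebra_simps)
    qed
    hence "d < G B / B" using B A assms by (simp add: field_simps)
    thus "(a, d) \<in> D_minus k g"
      unfolding D_minus_def using dia A B assms unfolding G_def by auto
  qed
qed

end
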